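(* Let $H$ and $K$ be subgroups of a finite group $G$ such that $HK$ is a subgroup. If $H\cap K$ is a perfect code of $K$, then $H$ is a perfect code of $HK$.
   Context: For a group $G$ with identity $e$ and an inverse-closed subset $S\subseteq G\setminus\{e\}$, the Cayley graph $\mathrm{Cay}(G,S)$ has vertex set $G$ and edges $\{g,sg\}$ for $s\in S$, $g\in G$. A perfect code in a graph is an independent set $C$ of vertices such that every vertex outside $C$ is adjacent to exactly one vertex of $C$. A subgroup $H$ of $G$ is a perfect code of $G$ if some Cayley graph of $G$ admits $H$ as a perfect code. *)

theory Defs
  imports "HOL-Algebra.Algebra"
begin

definition connection_set :: "('a, 'b) monoid_scheme \<Rightarrow> 'a set \<Rightarrow> bool" where
  "connection_set G S \<longleftrightarrow> S \<subseteq> carrier G - {\<one>\<^bsub>G\<^esub>} \<and> (\<forall>s\<in>S. inv\<^bsub>G\<^esub> s \<in> S)"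

definition cay_adj :: "('a, 'b) monoid_scheme \<Rightarrow> 'a set \<Rightarrow> 'a \<Rightarrow> 'a \<Rightarrow> bool" where
  "cay_adj G S g h \<longleftrightarrow> g \<in> carrier G \<and> h \<in> carrier G \<and>
     ((\<exists>s\<in>S. h = s \<otimes>\<^bsub>G\<^esub> g) \<or> (\<exists>s\<in>S. g = s \<otimes>\<^bsub>G\<^esub> h))"

definition cay_perfect_code :: "('a, 'b) monoid_scheme \<Rightarrow> 'a set \<Rightarrow> 'a set \<Rightarrow> bool" where
  "cay_perfect_code G S C \<longleftrightarrow> C \<subseteq> carrier G \<and>
     (\<forall>c1\<in>C. \<forall>c2\<in>C. \<not> cay_adj G S c1 c2) \<and>
     (\<forall>v\<in>carrier G - C. \<exists>!c. c \<in> C \<and> cay_adj G S v c)"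

definition subgroup_perfect_code :: "('a, 'b) monoid_scheme \<Rightarrow> 'a set \<Rightarrow> bool" where
  "subgroup_perfect_code G H \<longleftrightarrow> (\<exists>S. connection_set G S \<and> cay_perfect_code G S H)"

end

theory Submission
  imports Defs
begin

lemma (in group) helper:
  assumes "subgroup H G" and "subgroup K G"
    and "subgroup (H <#> K) G"
    and "subgroup_perfect_code (G\<lparr>carrier := K\<rparr>) (H \<inter> K)"
  shows "subgroup_perfect_code (G\<lparr>carrier := H <#> K\<rparr>) H"
proof -
  have sH: "subgroup H G" and sK: "subgroup K G" and sHK: "subgroup (H <#> K) G" by fact+
  have HG: "H \<subseteq> carrier G" and KG: "K \<subseteq> carrier G" using sH sK subgroup.subset by auto
  define HK where "HK = H <#> K"
  have HKdef: "HK = (\<Union>h\<in>H. \<Union>k\<in>K. {h \<otimes> k})" unfolding HK_def set_mult_def by simp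
  have HKG: "HK \<subseteq> carrier G" using sHK subgroup.subset HK_def by auto
  have K_HK: "K \<subseteq> HK"
  proof
    fix k assume k: "k \<in> K"
    then have "k = \<one> \<otimes> k" using KG by auto
    then show "k \<in> HK" unfolding HKdef
      using subgroup.one_closed[OF sH] k by blast
  qed
  have H_HK: "H \<subseteq> HK"
  proof
    fix h assume h: "h \<in> H"
    then have "h = h \<otimes> \<one>" using HG by auto
    then show "h \<in> HK" unfolding HKdef
      using subgroup.one_closed[OF sK] h by blast
  qed
  obtain S where cs: "connection_set (G\<lparr>carrier := K\<rparr>) S"
    and pc: "cay_perfect_code (G\<lparr>carrier := K\<rparr>) S (H \<inter> K)"
    using assms(4) unfolding subgroup_perfect_code_def by blast
  have SK: "S \<subseteq> K" and S1: "\<one> \<notin> S" and Sinv: "\<And>s. s \<in> S \<Longrightarrow> inv s \<in> S"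
  proof -
    show SK: "S \<subseteq> K" using cs unfolding connection_set_def by auto
    show "\<one> \<notin> S" using cs unfolding connection_set_def by auto
    fix s assume "s \<in> S"
    then have a: "inv\<^bsub>G\<lparr>carrier := K\<rparr>\<^esub> s \<in> S" using cs unfolding connection_set_def by blast
    have "s \<in> K" using SK \<open>s \<in> S\<close> by blast
    then show "inv s \<in> S" using a m_inv_consistent[OF sK] by simp
  qed
  have SG: "S \<subseteq> carrier G" using SK KG by auto
  have adj_iff: "cay_adj (G\<lparr>carrier := Z\<rparr>) S y c \<longleftrightarrow> y \<in> Z \<and> c \<in> Z \<and> (\<exists>s\<in>S. c = s \<otimes> y)"
    if "Z \<subseteq> carrier G" for Z y c
  proof
    assume a: "cay_adj (G\<lparr>carrier := Z\<rparr>) S y c"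
    then have vc: "y \<in> Z" "c \<in> Z" unfolding cay_adj_def by auto
    from a consider (1) s where "s \<in> S" "c = s \<otimes> y" | (2) s where "s \<in> S" "y = s \<otimes> c"
      unfolding cay_adj_def by auto
    then show "y \<in> Z \<and> c \<in> Z \<and> (\<exists>s\<in>S. c = s \<otimes> y)"
    proof cases
      case 1 then show ?thesis using vc by auto
    next
      case 2
      have sG: "s \<in> carrier G" using 2 SG by blast
      have cG: "c \<in> carrier G" using vc that by blast
      have "inv s \<otimes> y = c" using 2 sG cG by (simp add: m_assoc[symmetric])
      then have "c = inv s \<otimes> y" by simp
      then show ?thesis using vc Sinv 2 by auto
    qed
  next
    assume "y \<in> Z \<and> c \<in> Z \<and> (\<exists>s\<in>S. c = s \<otimes> y)"
    then show "cay_adj (G\<lparr>carrier := Z\<rparr>) S y c" unfolding cay_adj_def by auto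
  qed
  have SH: "S \<inter> H = {}"
  proof (rule ccontr)
    assume "S \<inter> H \<noteq> {}"
    then obtain s where s: "s \<in> S" "s \<in> H" by auto
    have "cay_adj (G\<lparr>carrier := K\<rparr>) S \<one> s"
    proof -
      have "s \<in> K" "s \<in> carrier G" using s SK SG by blast+
      then have "s = s \<otimes> \<one>" by simp
      then have "\<exists>t\<in>S. s = t \<otimes> \<one>" using s(1) by blast
      then show ?thesis unfolding adj_iff[OF KG] using \<open>s \<in> K\<close> subgroup.one_closed[OF sK] by blast
    qed
    moreover have "\<one> \<in> H \<inter> K" "s \<in> H \<inter> K" using s SK subgroup.one_closed[OF sK] subgroup.one_closed[OF sH] by auto
    moreover have "\<forall>c1\<in>H \<inter> K. \<forall>c2\<in>H \<inter> K. \<not> cay_adj (G\<lparr>carrier := K\<rparr>) S c1 c2"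
      using pc unfolding cay_perfect_code_def by (elim conjE)
    ultimately show False by blast
  qed
  have cs2: "connection_set (G\<lparr>carrier := HK\<rparr>) S"
  proof -
    have "inv\<^bsub>G\<lparr>carrier := HK\<rparr>\<^esub> s \<in> S" if "s \<in> S" for s
    proof -
      have "s \<in> HK" using that SK K_HK by blast
      then show ?thesis using m_inv_consistent[OF sHK[folded HK_def]] Sinv[OF that] by simp
    qed
    moreover have "S \<subseteq> carrier (G\<lparr>carrier := HK\<rparr>) - {\<one>\<^bsub>G\<lparr>carrier := HK\<rparr>\<^esub>}"
      using SK K_HK S1 by auto
    ultimately show ?thesis unfolding connection_set_def by blast
  qed
  have indep: "\<forall>c1\<in>H. \<forall>c2\<in>H. \<not> cay_adj (G\<lparr>carrier := HK\<rparr>) S c1 c2"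
  proof (intro ballI notI)
    fix c1 c2 assume c: "c1 \<in> H" "c2 \<in> H" and "cay_adj (G\<lparr>carrier := HK\<rparr>) S c1 c2"
    then obtain s where s: "s \<in> S" "c2 = s \<otimes> c1" using adj_iff[OF HKG] by auto
    have sG: "s \<in> carrier G" using s SG by blast
    have c1G: "c1 \<in> carrier G" using c HG by blast
    have "c2 \<otimes> inv c1 = s" using s sG c1G by (simp add: m_assoc)
    then have "s = c2 \<otimes> inv c1" by simp
    then have "s \<in> H" using c sH by (simp add: subgroup.m_closed subgroup.m_inv_closed)
    then show False using SH s by auto
  qed
  have dom: "\<exists>!c. c \<in> H \<and> cay_adj (G\<lparr>carrier := HK\<rparr>) S y c" if y: "y \<in> HK - H" for y
  proof -
    have sHK': "subgroup HK G" using sHK unfolding HK_def .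
    have "inv y \<in> HK" using y subgroup.m_inv_closed[OF sHK'] by blast
    then obtain h0 k0 where hk: "h0 \<in> H" "k0 \<in> K" "inv y = h0 \<otimes> k0" unfolding HKdef by blast
    define k where "k = inv k0"
    define h where "h = inv h0"
    have k: "k \<in> K" unfolding k_def using subgroup.m_inv_closed[OF sK hk(2)] .
    have h: "h \<in> H" unfolding h_def using subgroup.m_inv_closed[OF sH hk(1)] .
    have kG: "k \<in> carrier G" and hG: "h \<in> carrier G" using k h KG HG by auto
    have vG: "y \<in> carrier G" using y HKG by auto
    have vkh: "y = k \<otimes> h"
    proof -
      have "y = inv (inv y)" using vG by simp
      also have "\<dots> = inv (h0 \<otimes> k0)" using hk by simp
      also have "\<dots> = k \<otimes> h"
      proof -
        have "h0 \<in> carrier G" "k0 \<in> carrier G" using hk HG KG by blast+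
        then show ?thesis unfolding k_def h_def by (simp add: inv_mult_group)
      qed
      finally show ?thesis .
    qed
    have kH: "k \<notin> H"
    proof
      assume "k \<in> H" then have "y \<in> H" using vkh h sH subgroup.m_closed by metis
      then show False using y by auto
    qed
    have all: "\<forall>y\<in>carrier (G\<lparr>carrier := K\<rparr>) - H \<inter> K. \<exists>!c. c \<in> H \<inter> K \<and> cay_adj (G\<lparr>carrier := K\<rparr>) S y c"
      using pc unfolding cay_perfect_code_def by (elim conjE)
    have kin: "k \<in> carrier (G\<lparr>carrier := K\<rparr>) - H \<inter> K" using k kH by simp
    have uK: "\<exists>!c. c \<in> H \<inter> K \<and> cay_adj (G\<lparr>carrier := K\<rparr>) S k c"
      using bspec[OF all kin] .
    then obtain c where c: "c \<in> H \<inter> K" "cay_adj (G\<lparr>carrier := K\<rparr>) S k c" by blast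
    then obtain s where s: "s \<in> S" "c = s \<otimes> k" unfolding adj_iff[OF KG] by blast
    have sG: "s \<in> carrier G" using s SG by auto
    show ?thesis
    proof (rule ex1I[of _ "c \<otimes> h"])
      have cH: "c \<in> H" using c(1) by blast
      have ch: "c \<otimes> h \<in> H" using subgroup.m_closed[OF sH cH h] .
      moreover have "c \<otimes> h = s \<otimes> y" unfolding s(2) vkh using sG kG hG by (rule m_assoc)
      moreover have "c \<otimes> h \<in> HK" using ch H_HK by blast
      moreover have "y \<in> HK" using y by blast
      ultimately show "c \<otimes> h \<in> H \<and> cay_adj (G\<lparr>carrier := HK\<rparr>) S y (c \<otimes> h)"
        unfolding adj_iff[OF HKG] using s(1) by blast
    next
      fix d assume d: "d \<in> H \<and> cay_adj (G\<lparr>carrier := HK\<rparr>) S y d"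
      then obtain t where t: "t \<in> S" "d = t \<otimes> y" unfolding adj_iff[OF HKG] by blast
      have tG: "t \<in> carrier G" using t SG by auto
      have dG: "d \<in> carrier G" using d HG by auto
      have dtk: "d = (t \<otimes> k) \<otimes> h" unfolding t(2) vkh using tG kG hG by (rule m_assoc[symmetric])
      then have "d \<otimes> inv h = t \<otimes> k" using tG kG hG by (simp add: m_assoc)
      then have e: "t \<otimes> k = d \<otimes> inv h" by simp
      have dH: "d \<in> H" using d by blast
      have tK: "t \<in> K" using t(1) SK by blast
      have "t \<otimes> k \<in> H" unfolding e using subgroup.m_closed[OF sH dH subgroup.m_inv_closed[OF sH h]] .
      moreover have "t \<otimes> k \<in> K" using subgroup.m_closed[OF sK tK k] .
      moreover have "cay_adj (G\<lparr>carrier := K\<rparr>) S k (t \<otimes> k)"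
        unfolding adj_iff[OF KG] using k t \<open>t \<otimes> k \<in> K\<close> by blast
      ultimately have "t \<otimes> k \<in> H \<inter> K \<and> cay_adj (G\<lparr>carrier := K\<rparr>) S k (t \<otimes> k)"
        by blast
      then have "t \<otimes> k = c" using uK c by (metis (no_types, lifting))
      then have "d = c \<otimes> h" using dtk by simp
      then show "d = c \<otimes> h" .
    qed
  qed
  have pc2: "cay_perfect_code (G\<lparr>carrier := HK\<rparr>) S H"
  proof -
    have "\<forall>y\<in>carrier (G\<lparr>carrier := HK\<rparr>) - H. \<exists>!c. c \<in> H \<and> cay_adj (G\<lparr>carrier := HK\<rparr>) S y c"
      using dom by simp
    moreover have "H \<subseteq> carrier (G\<lparr>carrier := HK\<rparr>)" using H_HK by simp
    ultimately show ?thesis unfolding cay_perfect_code_def using indep by (intro conjI)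
  qed
  have "connection_set (G\<lparr>carrier := HK\<rparr>) S \<and> cay_perfect_code (G\<lparr>carrier := HK\<rparr>) S H"
    using cs2 pc2 by (rule conjI)
  then have "\<exists>S. connection_set (G\<lparr>carrier := HK\<rparr>) S \<and> cay_perfect_code (G\<lparr>carrier := HK\<rparr>) S H"
    by (rule exI)
  then show ?thesis unfolding subgroup_perfect_code_def HK_def .
qed

theorem lemma4p1:
  fixes G :: "('a, 'b) monoid_scheme" and H K :: "'a set"
  assumes "group G" and "finite (carrier G)"
    and "subgroup H G" and "subgroup K G"
    and "subgroup (H <#>\<^bsub>G\<^esub> K) G"
    and "subgroup_perfect_code (G\<lparr>carrier := K\<rparr>) (H \<inter> K)"
  shows "subgroup_perfect_code (G\<lparr>carrier := H <#>\<^bsub>G\<^esub> K\<rparr>) H"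
  by (rule group.helper[OF assms(1,3,4,5,6)])

end
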